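(* Consider the MT-model with $k$-stifling on $\mathbb{T}_d$ with $k\ge2$, $d\ge2$, and let $X^{(k)}$ be the number of successors of a given non-root vertex $v$ that are ever informed, conditionally on $v$ being informed. Then $$\mathbb{P}(X^{(k)}=i)=\binom{d}{i}\frac{(i+1)!}{(d+1)^{i+k}}\,\mathcal{S}(i,k),\qquad i\in\{0,1,\dots,d\},$$ where $\mathcal{S}(i,k):=\sum_{m_1=1}^{i+1}\sum_{m_2=m_1}^{i+1}\cdots\sum_{m_{k-1}=m_{k-2}}^{i+1}\prod_{\ell=1}^{k-1}m_\ell$ (a sum over $k-1$ nested indices $1\le m_1\le\cdots\le m_{k-1}\le i+1$). Moreover, $\mathbb{E}(X^{(k)})>1$ for every $d\ge2$.
   Context: Let $d\ge 2$ and let $\mathbb{T}_d$ be the infinite tree in which every vertex has degree $d+1$, with root $\mathbf 0$; the successors of a vertex $u$ are its neighbours farther from $\mathbf 0$. Fix $k\in\mathbb{N}$. The MT-model with $k$-stifling on $\mathbb{T}_d$ is the continuous-time Markov process $(\eta_t)_{t\ge0}$ on $\{-1,0,1,\dots,k\}^{\mathbb{T}_d}$, where $-1$ = ignorant, $i\in\{0,\dots,k-1\}$ = spreader that has had $i$ stifling experiences, $k$ = stifler. In configuration $\eta$, a vertex $x$ with $\eta(x)=-1$ jumps to $0$ at rate equal to the number of neighbours $y$ with $\eta(y)\in\{0,\dots,k-1\}$, and a vertex $x$ with $\eta(x)=i\in\{0,\dots,k-1\}$ jumps to $i+1$ at rate equal to the number of neighbours $y$ with $\eta(y)\in\{0,\dots,k\}$;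 stiflers never change. (Equivalently: each spreader contacts each of its $d+1$ neighbours at rate 1; contacting an ignorant makes it a spreader in state $0$, contacting a non-ignorant is a stifling experience.) Initially $\eta_0(\mathbf 0)=0$ and $\eta_0(x)=-1$ for $x\ne\mathbf 0$. A vertex is informed if it is ever in a state other than $-1$. *)

theory Defs
  imports "HOL-Probability.Probability"
begin

text \<open>A vertex of T_d is encoded as a list of child indices, most recent step first:
  [] is the root, and (c # u) is the c-th successor of u.  The root has d+1 successors
  (indices 0..d), every other vertex has d successors (indices 0..d-1), so every vertex
  has degree d+1.\<close>

definition nsucc :: "nat \<Rightarrow> nat list \<Rightarrow> nat" where
  "nsucc d u = (if u = [] then d + 1 else d)"

fun tvert :: "nat \<Rightarrow> nat list \<Rightarrow> bool" where
  "tvert d [] = True"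
| "tvert d (c # u) = (tvert d u \<and> c < nsucc d u)"

definition succs :: "nat \<Rightarrow> nat list \<Rightarrow> nat list set" where
  "succs d u = {c # u | c. c < nsucc d u}"

definition nbrs :: "nat \<Rightarrow> nat list \<Rightarrow> nat list set" where
  "nbrs d u = succs d u \<union> (if u = [] then {} else {tl u})"

type_synonym config = "nat list \<Rightarrow> int"

text \<open>States: -1 ignorant, 0..k-1 spreader, k stifler.\<close>

definition init_cfg :: config where
  "init_cfg = (\<lambda>x. if x = [] then 0 else -1)"

definition spreader :: "nat \<Rightarrow> config \<Rightarrow> nat list \<Rightarrow> bool" where
  "spreader k \<eta> x \<longleftrightarrow> 0 \<le> \<eta> x \<and> \<eta> x < int k"

text \<open>Every spreader contacts each of its neighbours at rate 1.  Each transition of the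
  continuous-time process is such a contact (spreader x, neighbour y), and all these
  contacts have rate 1, so the embedded jump chain picks such a pair uniformly.\<close>

definition contacts :: "nat \<Rightarrow> nat \<Rightarrow> config \<Rightarrow> (nat list \<times> nat list) set" where
  "contacts d k \<eta> = {(x, y). tvert d x \<and> spreader k \<eta> x \<and> y \<in> nbrs d x}"

definition contact_update :: "config \<Rightarrow> nat list \<times> nat list \<Rightarrow> config" where
  "contact_update \<eta> p = (case p of (x, y) \<Rightarrow>
      if \<eta> y = -1 then \<eta>(y := 0) else \<eta>(x := \<eta> x + 1))"

definition mt_step :: "nat \<Rightarrow> nat \<Rightarrow> config \<Rightarrow> config pmf" where
  "mt_step d k \<eta> =
     (if contacts d k \<eta> \<noteq> {} \<and> finite (contacts d k \<eta>)
      then map_pmf (contact_update \<eta>) (pmf_of_set (contacts d k \<eta>))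
      else return_pmf \<eta>)"

fun mt_cfg :: "nat \<Rightarrow> nat \<Rightarrow> nat \<Rightarrow> config pmf" where
  "mt_cfg d k 0 = return_pmf init_cfg"
| "mt_cfg d k (Suc n) = bind_pmf (mt_cfg d k n) (mt_step d k)"

definition informed_by :: "nat \<Rightarrow> nat \<Rightarrow> nat \<Rightarrow> nat list \<Rightarrow> real" where
  "informed_by d k n v = measure_pmf.prob (mt_cfg d k n) {\<eta>. \<eta> v \<noteq> -1}"

definition nsucc_informed :: "nat \<Rightarrow> config \<Rightarrow> nat list \<Rightarrow> nat" where
  "nsucc_informed d \<eta> v = card {c \<in> succs d v. \<eta> c \<noteq> -1}"

definition joint_by :: "nat \<Rightarrow> nat \<Rightarrow> nat \<Rightarrow> nat list \<Rightarrow> nat \<Rightarrow> real" where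
  "joint_by d k n v i =
     measure_pmf.prob (mt_cfg d k n) {\<eta>. \<eta> v \<noteq> -1 \<and> nsucc_informed d \<eta> v = i}"

text \<open>Since informed sets only grow and the process performs all its jumps in the jump
  chain, P(v ever informed) and P(v ever informed and exactly i successors ever informed)
  are the limits of these quantities as n goes to infinity.\<close>

definition P_informed :: "nat \<Rightarrow> nat \<Rightarrow> nat list \<Rightarrow> real" where
  "P_informed d k v = lim (\<lambda>n. informed_by d k n v)"

definition P_joint :: "nat \<Rightarrow> nat \<Rightarrow> nat list \<Rightarrow> nat \<Rightarrow> real" where
  "P_joint d k v i = lim (\<lambda>n. joint_by d k n v i)"

definition P_X :: "nat \<Rightarrow> nat \<Rightarrow> nat list \<Rightarrow> nat \<Rightarrow> real" where
  "P_X d k v i = P_joint d k v i / P_informed d k v"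

text \<open>nested_sum j lo hi = sum over lo \<le> m_1 \<le> ... \<le> m_j \<le> hi of m_1 * ... * m_j.\<close>

fun nested_sum :: "nat \<Rightarrow> nat \<Rightarrow> nat \<Rightarrow> nat" where
  "nested_sum 0 lo hi = 1"
| "nested_sum (Suc j) lo hi = (\<Sum>m = lo..hi. m * nested_sum j m hi)"

definition S_ik :: "nat \<Rightarrow> nat \<Rightarrow> nat" where
  "S_ik i k = nested_sum (k - 1) 1 (i + 1)"

end

theory Submission
  imports Defs
begin


function gloc :: "nat \<Rightarrow> nat \<Rightarrow> nat \<Rightarrow> nat \<Rightarrow> nat \<Rightarrow> real" where
  "gloc d k i s j = (if k \<le> s then (if j = i then 1 else 0)
     else if j < d then real (d - j) / real (d + 1) * gloc d k i s (Suc j)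
                        + real (Suc j) / real (d + 1) * gloc d k i (Suc s) j
     else gloc d k i (Suc s) j)"
  by auto
termination by (relation "Wellfounded.measure (\<lambda>(d,k,i,s,j). (k - s) + (d - j))") auto

declare gloc.simps[simp del]

lemma gloc_bounds: "0 \<le> gloc d k i s j \<and> gloc d k i s j \<le> 1"
proof (induction d k i s j rule: gloc.induct)
  case (1 d k i s j)
  show ?case
  proof (cases "k \<le> s")
    case True then show ?thesis by (simp add: gloc.simps)
  next
    case False
    show ?thesis
    proof (cases "j < d")
      case True
      let ?a = "real (d - j) / real (d + 1)" and ?b = "real (Suc j) / real (d + 1)"
      have "real (d-j) + real (Suc j) = real (d+1)" using True by simp
      then have ab: "?a + ?b = 1" by (metis add_divide_distrib div_self of_nat_add of_nat_1 of_nat_Suc of_nat_eq_0_iff add_is_0 zero_neq_one)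
      have a0: "?a \<ge> 0" "?b \<ge> 0" by auto
      have I1: "0 \<le> gloc d k i s (Suc j)" "gloc d k i s (Suc j) \<le> 1"
        and I2: "0 \<le> gloc d k i (Suc s) j" "gloc d k i (Suc s) j \<le> 1"
        using 1 False True by auto
      have e: "gloc d k i s j = ?a * gloc d k i s (Suc j) + ?b * gloc d k i (Suc s) j"
        using False True by (subst gloc.simps) simp
      have "?a * gloc d k i s (Suc j) \<le> ?a" using I1 a0 by (intro mult_left_le)
      moreover have "?b * gloc d k i (Suc s) j \<le> ?b" using I2 a0 by (intro mult_left_le)
      ultimately show ?thesis using e ab I1 I2 a0 by (simp add: add_mono)
    next
      case False2: False
      have e: "gloc d k i s j = gloc d k i (Suc s) j"
        using False False2 by (subst gloc.simps) simp
      show ?thesis using 1 False False2 e by auto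
    qed
  qed
qed

lemma gloc_gt: "i < j \<Longrightarrow> gloc d k i s j = 0"
proof (induction d k i s j rule: gloc.induct)
  case (1 d k i s j)
  then show ?case by (subst gloc.simps) auto
qed

lemma gloc_dd: "j = d \<Longrightarrow> i = d \<Longrightarrow> gloc d k i s j = 1"
proof (induction d k i s j rule: gloc.induct)
  case (1 d k i s j)
  then show ?case by (subst gloc.simps) auto
qed

lemma ns_rec: "lo \<le> hi \<Longrightarrow> nested_sum (Suc n) lo hi = lo * nested_sum n lo hi + nested_sum (Suc n) (Suc lo) hi"
  by (simp add: sum.atLeast_Suc_atMost)

lemma ns_empty: "hi < lo \<Longrightarrow> nested_sum (Suc n) lo hi = 0"
  by simp

lemma ns_same: "nested_sum n h h = h ^ n"
  by (induction n) auto

declare nested_sum.simps(2)[simp del]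

lemma fact_diff_Suc: "j < d \<Longrightarrow> (fact (d - j) :: real) = real (d - j) * fact (d - Suc j)"
  by (metis Suc_diff_Suc fact_Suc of_nat_Suc)

lemma gloc_formula:
  "j \<le> i \<Longrightarrow> i \<le> d \<Longrightarrow> s < k \<Longrightarrow>
   gloc d k i s j * real (d+1) ^ (i - j + k - s) * fact (d - i)
   = fact (d - j) * real (i+1) * real (nested_sum (k - s - 1) (j+1) (i+1))"
proof (induction d k i s j rule: gloc.induct)
  case (1 d k i s j)
  note IH1 = 1(1) and IH2 = 1(2)
  have ji: "j \<le> i" and id: "i \<le> d" and sk: "s < k" using 1(4,5,6) by auto
  let ?D = "real (d+1)"
  let ?N = "\<lambda>n lo. real (nested_sum n lo (i+1))"
  show ?case
  proof (cases "j < d")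
    case False
    then have jd: "j = d" "i = d" using ji id by auto
    have "gloc d k i s j = 1" using jd gloc_dd by auto
    moreover have "k - s = Suc (k - s - 1)" using sk by simp
    ultimately show ?thesis using jd by (simp add: ns_same)
  next
    case jd: True
    have nks: "\<not> k \<le> s" using sk by simp
    have e: "gloc d k i s j = real (d - j) / ?D * gloc d k i s (Suc j)
                        + real (Suc j) / ?D * gloc d k i (Suc s) j"
      using jd sk by (subst gloc.simps) simp
    define E where "E = i - j + k - s - 1"
    have EE: "i - j + k - s = Suc E" using ji sk unfolding E_def by simp
    have Dpos: "?D \<noteq> 0" by simp
    have X: "gloc d k i s j * ?D ^ (i - j + k - s) * fact (d - i)
        = real (d - j) * (gloc d k i s (Suc j) * ?D ^ E * fact (d - i))
          + real (Suc j) * (gloc d k i (Suc s) j * ?D ^ E * fact (d - i))"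
    proof -
      have "gloc d k i s j * ?D ^ (i - j + k - s) * fact (d - i) = 
         (real (d - j) / ?D * gloc d k i s (Suc j) + real (Suc j) / ?D * gloc d k i (Suc s) j) * (?D * ?D ^ E) * fact (d - i)"
        unfolding e EE by simp
      also have "\<dots> = real (d - j) * (gloc d k i s (Suc j) * ?D ^ E * fact (d - i))
          + real (Suc j) * (gloc d k i (Suc s) j * ?D ^ E * fact (d - i))"
        using Dpos by (simp add: divide_simps) (simp add: algebra_simps)
      finally show ?thesis .
    qed
    have fj: "(fact (d - j) :: real) = real (d - j) * fact (d - Suc j)" using fact_diff_Suc[OF jd] .
    show ?thesis
    proof (cases "Suc s = k")
      case sk1: True
      have n0: "k - s - 1 = 0" using sk1 by simp
      show ?thesis
      proof (cases "j < i")
        case True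
        have I0: "gloc d k i s (Suc j) * ?D ^ (i - Suc j + k - s) * fact (d - i)
             = fact (d - Suc j) * real (i+1) * ?N (k - s - 1) (Suc j + 1)"
          using IH1[OF nks jd _ id sk] True by simp
        have I: "gloc d k i s (Suc j) * ?D ^ E * fact (d - i) = fact (d - Suc j) * real (i+1)"
          using I0 True unfolding E_def n0 by simp
        have g2: "gloc d k i (Suc s) j = 0" using sk1 True by (subst gloc.simps) simp
        show ?thesis unfolding X I g2 n0 fj by simp
      next
        case False
        then have ji: "j = i" using ji by simp
        have g1: "gloc d k i s (Suc j) = 0" using ji gloc_gt by simp
        have g2: "gloc d k i (Suc s) j = 1" using sk1 ji by (subst gloc.simps) simp
        have E0: "E = 0" using EE sk1 ji by simp
        show ?thesis unfolding X g1 g2 n0 E0 using ji by simp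
      qed
    next
      case sk1: False
      then have sk': "Suc s < k" using sk by simp
      define n where "n = k - s - 2"
      have n: "k - s - 1 = Suc n" using sk' unfolding n_def by simp
      have n2: "k - Suc s - 1 = n" using sk' unfolding n_def by simp
      have I2: "gloc d k i (Suc s) j * ?D ^ E * fact (d - i) = fact (d - j) * real (i+1) * ?N n (j+1)"
      proof -
        have "gloc d k i (Suc s) j * ?D ^ (i - j + k - Suc s) * fact (d - i)
             = fact (d - j) * real (i+1) * ?N (k - Suc s - 1) (j + 1)"
          using IH2[OF nks jd ji id sk'] .
        moreover have "i - j + k - Suc s = E" unfolding E_def by simp
        ultimately show ?thesis unfolding n2 by simp
      qed
      show ?thesis
      proof (cases "j < i")
        case True
        have I: "gloc d k i s (Suc j) * ?D ^ E * fact (d - i) = fact (d - Suc j) * real (i+1) * ?N (Suc n) (Suc j + 1)"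
        proof -
          have "gloc d k i s (Suc j) * ?D ^ (i - Suc j + k - s) * fact (d - i)
             = fact (d - Suc j) * real (i+1) * ?N (k - s - 1) (Suc j + 1)"
            using IH1[OF nks jd _ id sk] True by simp
          moreover have "i - Suc j + k - s = E" unfolding E_def using True by simp
          ultimately show ?thesis unfolding n by simp
        qed
        have R: "?N (Suc n) (j+1) = real (j+1) * ?N n (j+1) + ?N (Suc n) (Suc j + 1)"
          using ns_rec[of "j+1" "i+1" n] True by (simp add: algebra_simps)
        show ?thesis unfolding X I I2 n R fj by (simp add: algebra_simps)
      next
        case False
        then have ji: "j = i" using ji by simp
        have g1: "gloc d k i s (Suc j) = 0" using ji gloc_gt by simp
        have R: "?N (Suc n) (j+1) = real (j+1) * ?N n (j+1)"
          using ns_rec[of "j+1" "i+1" n] ns_empty[of "i+1" "i+2" n] ji by (simp add: algebra_simps)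
        show ?thesis unfolding X g1 I2 n R using ji by (simp add: algebra_simps)
      qed
    qed
  qed
qed

lemma gloc_formula0:
  assumes "i \<le> d" "1 \<le> k"
  shows "gloc d k i 0 0 = real (d choose i) * fact (i + 1) / real (d + 1) ^ (i + k) * real (S_ik i k)"
proof -
  have f: "gloc d k i 0 0 * real (d+1) ^ (i + k) * fact (d - i)
     = fact d * real (i+1) * real (S_ik i k)"
    using gloc_formula[of 0 i d 0 k] assms unfolding S_ik_def by simp
  have b: "real (d choose i) = fact d / (fact i * fact (d - i))"
    using assms(1) by (simp add: binomial_fact)
  have fi: "(fact (i + 1) :: real) = real (i+1) * fact i" by simp
  have p: "real (d+1) ^ (i + k) > 0" "(fact (d - i) :: real) > 0" "(fact i :: real) > 0" by auto
  show ?thesis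
    using f p unfolding b fi by (simp add: field_simps)
qed

lemma div_comb1: "(x::real)/D*2 + y/D*1 = (2*x+y)/D" by (simp add: add_divide_distrib)
lemma div_comb2: "(a::real)/D*(b/D) + 1/D*(c/D) = (a*b+c)/(D*D)" by (simp add: add_divide_distrib)

definition Eloc :: "nat \<Rightarrow> nat \<Rightarrow> nat \<Rightarrow> nat \<Rightarrow> real" where
  "Eloc d k s j = (\<Sum>i = 0..d. real i * gloc d k i s j)"

lemma Eloc_stop: "k \<le> s \<Longrightarrow> j \<le> d \<Longrightarrow> Eloc d k s j = real j"
proof -
  assume a: "k \<le> s" "j \<le> d"
  have "Eloc d k s j = (\<Sum>i = 0..d. (if i = j then real j else 0))"
    unfolding Eloc_def using a by (intro sum.cong refl) (subst gloc.simps, simp)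
  also have "\<dots> = real j" using a by (simp add: sum.delta)
  finally show ?thesis .
qed

lemma Eloc_step: "\<not> k \<le> s \<Longrightarrow> j < d \<Longrightarrow> Eloc d k s j =
   real (d - j) / real (d + 1) * Eloc d k s (Suc j) + real (Suc j) / real (d + 1) * Eloc d k (Suc s) j"
  unfolding Eloc_def by (subst gloc.simps) (simp add: sum_distrib_left sum.distrib algebra_simps)

lemma Eloc_step2: "\<not> k \<le> s \<Longrightarrow> \<not> j < d \<Longrightarrow> Eloc d k s j = Eloc d k (Suc s) j"
  unfolding Eloc_def by (subst gloc.simps) simp

lemma Eloc_ge: "j \<le> d \<Longrightarrow> Eloc d k s j \<ge> real j"
proof (induction "k - s + (d - j)" arbitrary: s j rule: less_induct)
  case less
  show ?case
  proof (cases "k \<le> s")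
    case True then show ?thesis using Eloc_stop less by simp
  next
    case nks: False
    show ?thesis
    proof (cases "j < d")
      case True
      have m1: "k - s + (d - Suc j) < k - s + (d - j)" using True by simp
      have h1: "Eloc d k s (Suc j) \<ge> real (Suc j)" using less(1)[OF m1] True by simp
      have h2: "Eloc d k (Suc s) j \<ge> real j" using less True nks by auto
      let ?a = "real (d - j) / real (d + 1)" and ?b = "real (Suc j) / real (d + 1)"
      have "real (d-j) + real (Suc j) = real (d+1)" using True by simp
      then have ab: "?a + ?b = 1" by (metis add_divide_distrib div_self of_nat_add of_nat_1 of_nat_Suc of_nat_eq_0_iff add_is_0 zero_neq_one)
      have "?a * real (Suc j) \<le> ?a * Eloc d k s (Suc j)" using h1 by (intro mult_left_mono) auto
      moreover have "?b * real j \<le> ?b * Eloc d k (Suc s) j" using h2 by (intro mult_left_mono) auto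
      moreover have "?a * real (Suc j) + ?b * real j \<ge> real j"
      proof -
        have gen: "\<And>a::real. a * real (Suc j) = a * real j + a" by (simp add: algebra_simps)
        have "?a * real (Suc j) = ?a * real j + ?a" by (rule gen)
        then have "?a * real (Suc j) + ?b * real j = (?a + ?b) * real j + ?a" by (simp add: algebra_simps)
        then show ?thesis using ab by simp
      qed
      ultimately show ?thesis using Eloc_step[OF nks True] by linarith
    next
      case False
      then show ?thesis using Eloc_step2[OF nks False] less nks by auto
    qed
  qed
qed

lemma Eloc_gt1: assumes "2 \<le> k" "2 \<le> d" shows "Eloc d k 0 0 > 1"
proof -
  let ?D = "real (d + 1)"
  have e00: "Eloc d k 0 0 = real d / ?D * Eloc d k 0 1 + 1 / ?D * Eloc d k 1 0"
    using Eloc_step[of k 0 0 d] assms by simp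
  have e01: "Eloc d k 0 1 = real (d - 1) / ?D * Eloc d k 0 2 + 2 / ?D * Eloc d k 1 1"
    using Eloc_step[of k 0 1 d] assms by (simp add: numeral_2_eq_2)
  have e10: "Eloc d k 1 0 = real d / ?D * Eloc d k 1 1 + 1 / ?D * Eloc d k 2 0"
    using Eloc_step[of k 1 0 d] assms by (simp add: numeral_2_eq_2)
  have g02: "Eloc d k 0 2 \<ge> 2" using Eloc_ge[of 2 d k 0] assms by simp
  have g11: "Eloc d k 1 1 \<ge> 1" using Eloc_ge[of 1 d k 1] assms by simp
  have g20: "Eloc d k 2 0 \<ge> 0" using Eloc_ge[of 0 d k 2] assms by simp
  have Dp: "?D > 0" by simp
  have Dn: "1 + real d \<noteq> 0" by simp
  have "Eloc d k 0 1 \<ge> real (d - 1) / ?D * 2 + 2 / ?D * 1"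
    unfolding e01 using g02 g11 Dp by (intro add_mono mult_left_mono) auto
  also have "real (d - 1) / ?D * 2 + 2 / ?D * 1 = 2 * real d / ?D"
    unfolding div_comb1 using assms by (simp add: of_nat_diff)
  finally have h01: "Eloc d k 0 1 \<ge> 2 * real d / ?D" .
  have "Eloc d k 1 0 \<ge> real d / ?D * 1 + 1 / ?D * 0"
    unfolding e10 using g20 g11 Dp by (intro add_mono mult_left_mono) auto
  then have h10: "Eloc d k 1 0 \<ge> real d / ?D" by simp
  have "Eloc d k 0 0 \<ge> real d / ?D * (2 * real d / ?D) + 1 / ?D * (real d / ?D)"
    unfolding e00 using h01 h10 Dp by (intro add_mono mult_left_mono) auto
  moreover have "real d / ?D * (2 * real d / ?D) + 1 / ?D * (real d / ?D) > 1"
  proof -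
    have "real d / ?D * (2 * real d / ?D) + 1 / ?D * (real d / ?D) = (2 * real d * real d + real d) / (?D * ?D)"
      unfolding div_comb2 by (simp add: algebra_simps)
    moreover have "2 * real d * real d + real d > ?D * ?D"
    proof -
      have "real d \<ge> 2" using assms by simp
      moreover have "real d * real d \<ge> 2 * real d" using \<open>real d \<ge> 2\<close> by (intro mult_right_mono) auto
      ultimately have "real d * real d > 1 + real d" by linarith
      then show ?thesis by (simp add: algebra_simps)
    qed
    ultimately show ?thesis using Dp by simp
  qed
  ultimately show ?thesis by linarith
qed




lemma integral_bind_pmf_nonneg:
  fixes f :: "'b \<Rightarrow> real"
  assumes f0: "\<And>x. 0 \<le> f x" and fB: "\<And>x. f x \<le> B"
  shows "measure_pmf.expectation (bind_pmf p q) f = measure_pmf.expectation p (\<lambda>x. measure_pmf.expectation (q x) f)"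
proof -
  have intf: "\<And>M. integrable (measure_pmf M) f"
    using f0 fB by (intro measure_pmf.integrable_const_bound[where B=B]) auto
  have g0: "\<And>x. 0 \<le> measure_pmf.expectation (q x) f" using f0 by (simp add: integral_nonneg)
  have gB: "\<And>x. measure_pmf.expectation (q x) f \<le> B"
  proof -
    fix x
    have "measure_pmf.expectation (q x) f \<le> measure_pmf.expectation (q x) (\<lambda>_. B)"
      using intf fB by (intro integral_mono) auto
    then show "measure_pmf.expectation (q x) f \<le> B" by simp
  qed
  have intg: "integrable (measure_pmf p) (\<lambda>x. measure_pmf.expectation (q x) f)"
    using g0 gB by (intro measure_pmf.integrable_const_bound[where B=B]) auto
  have "(\<integral>\<^sup>+x. f x \<partial>bind_pmf p q) = ennreal (measure_pmf.expectation (bind_pmf p q) f)"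
    by (rule nn_integral_eq_integral) (auto simp: intf f0)
  then have "ennreal (measure_pmf.expectation (bind_pmf p q) f) = (\<integral>\<^sup>+x. f x \<partial>bind_pmf p q)" by simp
  also have "\<dots> = (\<integral>\<^sup>+x. \<integral>\<^sup>+y. f y \<partial>q x \<partial>p)" by simp
  also have "\<dots> = (\<integral>\<^sup>+x. ennreal (measure_pmf.expectation (q x) f) \<partial>p)"
    using intf f0 by (simp add: nn_integral_eq_integral)
  also have "\<dots> = ennreal (measure_pmf.expectation p (\<lambda>x. measure_pmf.expectation (q x) f))"
    using intg g0 by (simp add: nn_integral_eq_integral)
  finally show ?thesis
    using g0 f0 by (simp add: integral_nonneg ennreal_inj)
qed

definition mtinv :: "nat \<Rightarrow> nat \<Rightarrow> nat \<Rightarrow> config \<Rightarrow> bool" where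
  "mtinv d k n \<eta> \<longleftrightarrow> (\<forall>x. \<eta> x \<noteq> -1 \<longrightarrow> tvert d x) \<and> (\<forall>x. -1 \<le> \<eta> x \<and> \<eta> x \<le> int k)
     \<and> finite {x. \<eta> x \<noteq> -1} \<and> card {x. \<eta> x \<noteq> -1} \<le> Suc n
     \<and> (\<forall>x. x \<noteq> [] \<longrightarrow> \<eta> x \<noteq> -1 \<longrightarrow> \<eta> (tl x) \<noteq> -1)"

lemma succs_eq: "succs d u = (\<lambda>c. c # u) ` {..<nsucc d u}"
  unfolding succs_def by auto

lemma finite_succs[simp]: "finite (succs d u)"
  unfolding succs_eq by simp

lemma card_succs: "card (succs d u) = nsucc d u"
  unfolding succs_eq by (subst card_image) (auto simp: inj_on_def)

lemma finite_nbrs[simp]: "finite (nbrs d u)"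
  unfolding nbrs_def by simp

lemma card_nbrs: "card (nbrs d u) \<le> d + 1"
proof (cases "u = []")
  case True then show ?thesis unfolding nbrs_def using card_succs[of d u] by (simp add: nsucc_def)
next
  case False
  have "card (nbrs d u) \<le> card (succs d u) + 1"
    unfolding nbrs_def using False by (simp add: card_insert_le_m1 card_insert_if)
  then show ?thesis using card_succs[of d u] False by (simp add: nsucc_def)
qed

lemma tvert_nbrs: "tvert d x \<Longrightarrow> y \<in> nbrs d x \<Longrightarrow> tvert d y"
  unfolding nbrs_def succs_def by (cases x) (auto split: if_splits)

lemma spreader_informed: "spreader k \<eta> x \<Longrightarrow> \<eta> x \<noteq> -1"
  unfolding spreader_def by auto

lemma contacts_sub: "contacts d k \<eta> \<subseteq> Sigma {x. \<eta> x \<noteq> -1} (nbrs d)"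
  unfolding contacts_def using spreader_informed by blast

lemma contacts_finite: "mtinv d k n \<eta> \<Longrightarrow> finite (contacts d k \<eta>)"
  unfolding mtinv_def by (rule finite_subset[OF contacts_sub]) auto

lemma contacts_card: "mtinv d k n \<eta> \<Longrightarrow> card (contacts d k \<eta>) \<le> (d + 1) * Suc n"
proof -
  assume I: "mtinv d k n \<eta>"
  let ?A = "{x. \<eta> x \<noteq> -1}"
  have fA: "finite ?A" and cA: "card ?A \<le> Suc n" using I unfolding mtinv_def by auto
  have "card (contacts d k \<eta>) \<le> card (Sigma ?A (nbrs d))"
    by (rule card_mono[OF _ contacts_sub]) (use fA in auto)
  also have "\<dots> = (\<Sum>x\<in>?A. card (nbrs d x))" using fA by (simp add: card_SigmaI)
  also have "\<dots> \<le> (\<Sum>x\<in>?A. d + 1)" by (intro sum_mono card_nbrs)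
  also have "\<dots> = (d + 1) * card ?A" by simp
  also have "\<dots> \<le> (d + 1) * Suc n" using cA by (rule mult_le_mono2)
  finally show ?thesis .
qed

lemma upd_informed: "p \<in> contacts d k \<eta> \<Longrightarrow> \<eta> z \<noteq> -1 \<Longrightarrow> contact_update \<eta> p z \<noteq> -1"
  unfolding contacts_def contact_update_def spreader_def by (auto split: prod.splits)

lemma step_informed: "\<eta>' \<in> set_pmf (mt_step d k \<eta>) \<Longrightarrow> \<eta> z \<noteq> -1 \<Longrightarrow> \<eta>' z \<noteq> -1"
  unfolding mt_step_def using upd_informed by (auto split: if_splits)

lemma inv_mono: "mtinv d k n \<eta> \<Longrightarrow> mtinv d k (Suc n) \<eta>"
  unfolding mtinv_def by auto

lemma inv_upd:
  assumes I: "mtinv d k n \<eta>" and p: "p \<in> contacts d k \<eta>"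
  shows "mtinv d k (Suc n) (contact_update \<eta> p)"
proof -
  obtain x y where pxy: "p = (x, y)" by (cases p)
  have tx: "tvert d x" and sx: "spreader k \<eta> x" and yn: "y \<in> nbrs d x"
    using p pxy unfolding contacts_def by auto
  have ty: "tvert d y" using tvert_nbrs tx yn by blast
  have I1: "\<forall>x. \<eta> x \<noteq> -1 \<longrightarrow> tvert d x" and I2: "\<forall>x. -1 \<le> \<eta> x \<and> \<eta> x \<le> int k"
    and I3: "finite {x. \<eta> x \<noteq> -1}" and I4: "card {x. \<eta> x \<noteq> -1} \<le> Suc n"
    and I5: "\<forall>x. x \<noteq> [] \<longrightarrow> \<eta> x \<noteq> -1 \<longrightarrow> \<eta> (tl x) \<noteq> -1"
    using I unfolding mtinv_def by auto
  show ?thesis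
  proof (cases "\<eta> y = -1")
    case True
    have upd: "contact_update \<eta> p = \<eta>(y := 0)" using True pxy unfolding contact_update_def by simp
    have S: "{z. (\<eta>(y := 0)) z \<noteq> -1} = insert y {z. \<eta> z \<noteq> -1}" by auto
    have par: "tl y = x" if "y \<noteq> []"
    proof -
      have "y \<in> succs d x \<or> (x \<noteq> [] \<and> y = tl x)" using yn unfolding nbrs_def by (auto split: if_splits)
      moreover have "\<not> (x \<noteq> [] \<and> y = tl x)"
        using I5 sx spreader_informed True by metis
      ultimately show ?thesis unfolding succs_def by auto
    qed
    have "mtinv d k (Suc n) (\<eta>(y := 0))"
      unfolding mtinv_def S using I1 I2 I3 I4 I5 ty par spreader_informed[OF sx] True
      by (auto simp: card_insert_if)
    then show ?thesis using upd by simp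
  next
    case False
    have upd: "contact_update \<eta> p = \<eta>(x := \<eta> x + 1)" using False pxy unfolding contact_update_def by simp
    have sx': "0 \<le> \<eta> x" "\<eta> x < int k" using sx unfolding spreader_def by auto
    have S: "{z. (\<eta>(x := \<eta> x + 1)) z \<noteq> -1} = {z. \<eta> z \<noteq> -1}" using sx' by auto
    have "mtinv d k (Suc n) (\<eta>(x := \<eta> x + 1))"
      unfolding mtinv_def S using I1 I2 I3 I4 I5 sx' by auto
    then show ?thesis using upd by simp
  qed
qed

lemma inv_step: "mtinv d k n \<eta> \<Longrightarrow> \<eta>' \<in> set_pmf (mt_step d k \<eta>) \<Longrightarrow> mtinv d k (Suc n) \<eta>'"
  unfolding mt_step_def using inv_upd inv_mono by (auto split: if_splits)

lemma inv_init: "mtinv d k 0 init_cfg"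
proof -
  have "{x. init_cfg x \<noteq> -1} = {[]}" unfolding init_cfg_def by auto
  then show ?thesis unfolding mtinv_def by (auto simp: init_cfg_def)
qed

lemma inv_cfg: "\<eta> \<in> set_pmf (mt_cfg d k n) \<Longrightarrow> mtinv d k n \<eta>"
proof (induction n arbitrary: \<eta>)
  case 0 then show ?case using inv_init by simp
next
  case (Suc n)
  then obtain x where x: "x \<in> set_pmf (mt_cfg d k n)" "\<eta> \<in> set_pmf (mt_step d k x)" by auto
  show ?case by (rule inv_step[OF Suc.IH[OF x(1)] x(2)])
qed

lemma inv_parent: "mtinv d k n \<eta> \<Longrightarrow> x \<noteq> [] \<Longrightarrow> \<eta> x \<noteq> -1 \<Longrightarrow> \<eta> (tl x) \<noteq> -1"
  unfolding mtinv_def by auto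

lemma nbrs_cases: "y \<in> nbrs d x \<Longrightarrow> (\<exists>c. y = c # x) \<or> (x \<noteq> [] \<and> y = tl x)"
  unfolding nbrs_def succs_def by (auto split: if_splits)

lemma tl_not_succ: "tl v \<notin> succs d v"
proof
  assume "tl v \<in> succs d v"
  then obtain c where "tl v = c # v" unfolding succs_def by auto
  then have "length (tl v) = Suc (length v)" by simp
  then show False by simp
qed

locale mtv =
  fixes d k :: nat and v :: "nat list"
  assumes k1: "1 \<le> k" and tv: "tvert d v" and vne: "v \<noteq> []"
begin

definition Sv :: "config \<Rightarrow> nat list set" where
  "Sv \<eta> = {c \<in> succs d v. \<eta> c \<noteq> -1}"

definition loc :: "(int \<Rightarrow> nat \<Rightarrow> real) \<Rightarrow> config \<Rightarrow> real" where
  "loc F \<eta> = F (\<eta> v) (nsucc_informed d \<eta> v)"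

lemma jv_Sv: "nsucc_informed d \<eta> v = card (Sv \<eta>)"
  unfolding nsucc_informed_def Sv_def by simp

lemma finite_Sv[simp]: "finite (Sv \<eta>)" unfolding Sv_def by simp

lemma card_succs_v: "card (succs d v) = d" using card_succs[of d v] vne by (simp add: nsucc_def)

lemma jv_le: "nsucc_informed d \<eta> v \<le> d"
  unfolding jv_Sv using card_mono[of "succs d v" "Sv \<eta>"] card_succs_v unfolding Sv_def by auto

lemma loc_eqI: "\<eta>' v = \<eta> v \<Longrightarrow> Sv \<eta>' = Sv \<eta> \<Longrightarrow> loc F \<eta>' = loc F \<eta>"
  unfolding loc_def jv_Sv by simp

lemma other_contact:
  assumes I: "mtinv d k n \<eta>" and vi: "\<eta> v \<noteq> -1" and p: "(x, y) \<in> contacts d k \<eta>" and xv: "x \<noteq> v"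
  shows "loc F (contact_update \<eta> (x, y)) = loc F \<eta>"
proof -
  have sx: "spreader k \<eta> x" and yn: "y \<in> nbrs d x" using p unfolding contacts_def by auto
  have xi: "\<eta> x \<noteq> -1" using spreader_informed[OF sx] .
  show ?thesis
  proof (cases "\<eta> y = -1")
    case True
    have upd: "contact_update \<eta> (x, y) = \<eta>(y := 0)" using True unfolding contact_update_def by simp
    have yv: "y \<noteq> v" using True vi by auto
    have ys: "y \<notin> succs d v"
    proof
      assume "y \<in> succs d v"
      then obtain c where yc: "y = c # v" unfolding succs_def by auto
      from nbrs_cases[OF yn] show False
      proof
        assume "\<exists>c. y = c # x" then show False using yc xv by auto
      next
        assume a: "x \<noteq> [] \<and> y = tl x"
        then have "\<eta> (tl x) \<noteq> -1" using inv_parent[OF I _ xi] by auto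
        then show False using a True by simp
      qed
    qed
    have "Sv (\<eta>(y := 0)) = Sv \<eta>" unfolding Sv_def using ys by auto
    then show ?thesis unfolding upd using yv by (intro loc_eqI) auto
  next
    case False
    have upd: "contact_update \<eta> (x, y) = \<eta>(x := \<eta> x + 1)" using False unfolding contact_update_def by simp
    have x0: "0 \<le> \<eta> x" using sx unfolding spreader_def by auto
    have "Sv (\<eta>(x := \<eta> x + 1)) = Sv \<eta>" unfolding Sv_def using x0 by auto
    then show ?thesis unfolding upd using xv by (intro loc_eqI) auto
  qed
qed

lemma step_exp:
  assumes "contacts d k \<eta> \<noteq> {}" "finite (contacts d k \<eta>)"
  shows "measure_pmf.expectation (mt_step d k \<eta>) f
     = (\<Sum>p\<in>contacts d k \<eta>. f (contact_update \<eta> p)) / real (card (contacts d k \<eta>))"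
  using assms unfolding mt_step_def by (simp add: integral_pmf_of_set)

lemma step_stifler:
  assumes I: "mtinv d k n \<eta>" and vi: "\<eta> v \<noteq> -1" and ns: "\<not> spreader k \<eta> v"
  shows "measure_pmf.expectation (mt_step d k \<eta>) (loc F) = loc F \<eta>"
proof (cases "contacts d k \<eta> = {}")
  case True then show ?thesis unfolding mt_step_def by simp
next
  case False
  let ?C = "contacts d k \<eta>"
  have fC: "finite ?C" using contacts_finite[OF I] .
  have "(\<Sum>p\<in>?C. loc F (contact_update \<eta> p)) = (\<Sum>p\<in>?C. loc F \<eta>)"
  proof (intro sum.cong refl)
    fix p assume pC: "p \<in> ?C"
    obtain x y where pxy: "p = (x, y)" by (cases p)
    have "x \<noteq> v" using pC pxy ns unfolding contacts_def by auto
    then show "loc F (contact_update \<eta> p) = loc F \<eta>" using other_contact[OF I vi] pC pxy by simp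
  qed
  then show ?thesis using step_exp[OF False fC] False fC by simp
qed

lemma nbrs_v: "nbrs d v = insert (tl v) (succs d v)"
  unfolding nbrs_def using vne by auto

lemma card_nbrs_v: "card (nbrs d v) = d + 1"
  unfolding nbrs_v using tl_not_succ[of v d] card_succs_v by simp

lemma step_spreader:
  assumes I: "mtinv d k n \<eta>" and sv: "spreader k \<eta> v"
  shows "measure_pmf.expectation (mt_step d k \<eta>) (loc F) = loc F \<eta> +
     (real (d - nsucc_informed d \<eta> v) * F (\<eta> v) (Suc (nsucc_informed d \<eta> v))
      + real (Suc (nsucc_informed d \<eta> v)) * F (\<eta> v + 1) (nsucc_informed d \<eta> v)
      - real (d + 1) * F (\<eta> v) (nsucc_informed d \<eta> v)) / real (card (contacts d k \<eta>))"
proof -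
  define s where "s = \<eta> v"
  define j where "j = nsucc_informed d \<eta> v"
  let ?C = "contacts d k \<eta>"
  let ?Cv = "Pair v ` nbrs d v"
  let ?L = "loc F \<eta>"
  let ?u = "contact_update \<eta>"
  have vi: "\<eta> v \<noteq> -1" using spreader_informed[OF sv] .
  have fC: "finite ?C" using contacts_finite[OF I] .
  have CvC: "?Cv \<subseteq> ?C" unfolding contacts_def using tv sv by auto
  have tvC: "(v, tl v) \<in> ?C" using CvC nbrs_v by auto
  then have Cne: "?C \<noteq> {}" by auto
  have cCv: "card ?Cv = d + 1" using card_nbrs_v by (simp add: card_image inj_on_def)
  have cC: "d + 1 \<le> card ?C" using card_mono[OF fC CvC] cCv by simp
  have LL: "loc F \<eta> = F s j" unfolding loc_def s_def j_def by simp
  have sum1: "(\<Sum>p\<in>?C - ?Cv. loc F (?u p)) = real (card ?C - (d + 1)) * ?L"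
  proof -
    have "(\<Sum>p\<in>?C - ?Cv. loc F (?u p)) = (\<Sum>p\<in>?C - ?Cv. ?L)"
    proof (intro sum.cong refl)
      fix p assume pC: "p \<in> ?C - ?Cv"
      obtain x y where pxy: "p = (x, y)" by (cases p)
      have "x \<noteq> v" using pC pxy unfolding contacts_def by auto
      then show "loc F (?u p) = ?L" using other_contact[OF I vi] pC pxy by simp
    qed
    also have "\<dots> = real (card (?C - ?Cv)) * ?L" by simp
    also have "card (?C - ?Cv) = card ?C - (d + 1)" using card_Diff_subset[OF _ CvC] fC cCv
      by (metis finite_subset CvC)
    finally show ?thesis .
  qed
  have inf_upd: "loc F (?u (v, y)) = F (s + 1) j" if "\<eta> y \<noteq> -1" for y
  proof -
    have u: "?u (v, y) = \<eta>(v := \<eta> v + 1)" using that unfolding contact_update_def by simp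
    have "Sv (\<eta>(v := \<eta> v + 1)) = Sv \<eta>" unfolding Sv_def succs_def by auto
    then show ?thesis unfolding u loc_def jv_Sv s_def j_def by simp
  qed
  have ign_upd: "loc F (?u (v, y)) = F s (Suc j)" if "y \<in> succs d v - Sv \<eta>" for y
  proof -
    have yi: "\<eta> y = -1" using that unfolding Sv_def by auto
    have u: "?u (v, y) = \<eta>(y := 0)" using yi unfolding contact_update_def by simp
    have yv: "y \<noteq> v" using yi vi by auto
    have "Sv (\<eta>(y := 0)) = insert y (Sv \<eta>)" using that unfolding Sv_def by auto
    moreover have "y \<notin> Sv \<eta>" using that by auto
    ultimately have "card (Sv (\<eta>(y := 0))) = Suc (card (Sv \<eta>))" by simp
    then show ?thesis unfolding u loc_def jv_Sv s_def j_def using yv by simp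
  qed
  have par: "\<eta> (tl v) \<noteq> -1" using inv_parent[OF I vne vi] .
  have SvS: "Sv \<eta> \<subseteq> succs d v" unfolding Sv_def by auto
  have cSv: "card (Sv \<eta>) = j" unfolding j_def jv_Sv ..
  have sum2: "(\<Sum>p\<in>?Cv. loc F (?u p)) = real (Suc j) * F (s + 1) j + real (d - j) * F s (Suc j)"
  proof -
    have "(\<Sum>p\<in>?Cv. loc F (?u p)) = (\<Sum>y\<in>nbrs d v. loc F (?u (v, y)))"
      by (subst sum.reindex) (auto simp: inj_on_def)
    also have "\<dots> = loc F (?u (v, tl v)) + (\<Sum>y\<in>succs d v. loc F (?u (v, y)))"
      unfolding nbrs_v using tl_not_succ[of v d] by simp
    also have "(\<Sum>y\<in>succs d v. loc F (?u (v, y))) = (\<Sum>y\<in>succs d v - Sv \<eta>. loc F (?u (v, y))) + (\<Sum>y\<in>Sv \<eta>. loc F (?u (v, y)))"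
      using sum.subset_diff[OF SvS] by simp
    also have "(\<Sum>y\<in>succs d v - Sv \<eta>. loc F (?u (v, y))) = (\<Sum>y\<in>succs d v - Sv \<eta>. F s (Suc j))"
      using ign_upd by simp
    also have "\<dots> = real (d - j) * F s (Suc j)"
      using card_Diff_subset[OF finite_Sv SvS] card_succs_v cSv by simp
    also have "(\<Sum>y\<in>Sv \<eta>. loc F (?u (v, y))) = (\<Sum>y\<in>Sv \<eta>. F (s + 1) j)"
      using inf_upd unfolding Sv_def by simp
    also have "\<dots> = real j * F (s + 1) j" using cSv by simp
    also have "loc F (?u (v, tl v)) = F (s + 1) j" using inf_upd par by simp
    finally show ?thesis by (simp add: algebra_simps)
  qed
  have tot: "(\<Sum>p\<in>?C. loc F (?u p)) = real (card ?C - (d + 1)) * ?L + (real (Suc j) * F (s + 1) j + real (d - j) * F s (Suc j))"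
  proof -
    have "(\<Sum>p\<in>?C. loc F (?u p)) = (\<Sum>p\<in>?C - ?Cv. loc F (?u p)) + (\<Sum>p\<in>?Cv. loc F (?u p))"
      by (rule sum.subset_diff[OF CvC fC])
    then show ?thesis unfolding sum1 sum2 .
  qed
  have cpos: "real (card ?C) > 0" using cC by simp
  have "measure_pmf.expectation (mt_step d k \<eta>) (loc F) = (\<Sum>p\<in>?C. loc F (?u p)) / real (card ?C)"
    using step_exp[OF Cne fC] .
  also have "\<dots> = ?L + (real (d - j) * F s (Suc j) + real (Suc j) * F (s + 1) j - real (d + 1) * F s j) / real (card ?C)"
    unfolding tot using cpos cC LL by (simp add: of_nat_diff field_simps)
  finally show ?thesis unfolding s_def j_def .
qed

lemma ign_support:
  assumes I: "mtinv d k n \<eta>" and vi: "\<eta> v = -1" and e': "\<eta>' \<in> set_pmf (mt_step d k \<eta>)"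
  shows "(\<eta>' v = -1 \<or> \<eta>' v = 0) \<and> Sv \<eta>' = {}"
proof -
  have Sv0: "Sv \<eta> = {}"
  proof -
    { fix c assume "c \<in> succs d v" "\<eta> c \<noteq> -1"
      then have "\<eta> (tl c) \<noteq> -1" "tl c = v" using inv_parent[OF I] unfolding succs_def by auto
      then have False using vi by simp }
    then show ?thesis unfolding Sv_def by auto
  qed
  show ?thesis
  proof (cases "contacts d k \<eta> \<noteq> {} \<and> finite (contacts d k \<eta>)")
    case False
    then have "\<eta>' = \<eta>" using e' unfolding mt_step_def by auto
    then show ?thesis using vi Sv0 by simp
  next
    case True
    then obtain x y where p: "(x, y) \<in> contacts d k \<eta>" and e: "\<eta>' = contact_update \<eta> (x, y)"
      using e' unfolding mt_step_def by auto
    have sx: "spreader k \<eta> x" and yn: "y \<in> nbrs d x" using p unfolding contacts_def by auto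
    have xi: "\<eta> x \<noteq> -1" using spreader_informed[OF sx] .
    have xv: "x \<noteq> v" using xi vi by auto
    show ?thesis
    proof (cases "\<eta> y = -1")
      case True
      have upd: "\<eta>' = \<eta>(y := 0)" using True e unfolding contact_update_def by simp
      have ys: "y \<notin> succs d v"
      proof
        assume "y \<in> succs d v"
        then obtain c where yc: "y = c # v" unfolding succs_def by auto
        from nbrs_cases[OF yn] show False
        proof
          assume "\<exists>c. y = c # x" then show False using yc xv by auto
        next
          assume a: "x \<noteq> [] \<and> y = tl x"
          then have "\<eta> (tl x) \<noteq> -1" using inv_parent[OF I _ xi] by auto
          then show False using a True by simp
        qed
      qed
      have "Sv (\<eta>(y := 0)) = Sv \<eta>" unfolding Sv_def using ys by auto
      then show ?thesis using upd vi Sv0 by auto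
    next
      case False
      have upd: "\<eta>' = \<eta>(x := \<eta> x + 1)" using False e unfolding contact_update_def by simp
      have xs: "x \<notin> succs d v"
      proof
        assume "x \<in> succs d v"
        then have "tl x = v" "x \<noteq> []" unfolding succs_def by auto
        then show False using inv_parent[OF I _ xi] vi by auto
      qed
      have "Sv (\<eta>(x := \<eta> x + 1)) = Sv \<eta>" unfolding Sv_def using xs by auto
      then show ?thesis using upd vi Sv0 xv by auto
    qed
  qed
qed

definition Ind :: "int \<Rightarrow> nat \<Rightarrow> real" where
  "Ind s j = (if s = -1 then 0 else 1)"

lemma step_ignorant:
  assumes I: "mtinv d k n \<eta>" and vi: "\<eta> v = -1" and F0: "F (-1) 0 = 0"
  shows "measure_pmf.expectation (mt_step d k \<eta>) (loc F) = F 0 0 * measure_pmf.expectation (mt_step d k \<eta>) (loc Ind)"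
proof -
  have "measure_pmf.expectation (mt_step d k \<eta>) (loc F) = measure_pmf.expectation (mt_step d k \<eta>) (\<lambda>x. F 0 0 * loc Ind x)"
  proof (rule integral_cong_AE)
    show "AE x in measure_pmf (mt_step d k \<eta>). loc F x = F 0 0 * loc Ind x"
    proof (rule AE_pmfI)
      fix y assume "y \<in> set_pmf (mt_step d k \<eta>)"
      from ign_support[OF I vi this] show "loc F y = F 0 0 * loc Ind y"
        unfolding loc_def jv_Sv Ind_def using F0 by auto
    qed
  qed simp_all
  then show ?thesis by simp
qed

lemma informed_Ind:
  assumes I: "mtinv d k n \<eta>" and vi: "\<eta> v \<noteq> -1"
  shows "measure_pmf.expectation (mt_step d k \<eta>) (loc Ind) = 1"
proof -
  have "measure_pmf.expectation (mt_step d k \<eta>) (loc Ind) = measure_pmf.expectation (mt_step d k \<eta>) (\<lambda>_. 1)"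
  proof (rule integral_cong_AE)
    show "AE x in measure_pmf (mt_step d k \<eta>). loc Ind x = 1"
    proof (rule AE_pmfI)
      fix y assume "y \<in> set_pmf (mt_step d k \<eta>)"
      from step_informed[OF this vi] show "loc Ind y = 1" unfolding loc_def Ind_def by simp
    qed
  qed simp_all
  then show ?thesis by simp
qed

end




lemma harm_aux: "(D::real) \<noteq> 0 \<Longrightarrow> a*x + b*y - D*(a/D*x + b/D*y) = 0"
  by (simp add: field_simps)

lemma gloc_harm:
  assumes "\<not> k \<le> s" "j \<le> d"
  shows "real (d - j) * gloc d k i s (Suc j) + real (Suc j) * gloc d k i (Suc s) j - real (d + 1) * gloc d k i s j = 0"
proof (cases "j < d")
  case True
  have e: "gloc d k i s j = real (d - j) / real (d + 1) * gloc d k i s (Suc j)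
                        + real (Suc j) / real (d + 1) * gloc d k i (Suc s) j"
    using assms True by (subst gloc.simps) simp
  show ?thesis unfolding e by (rule harm_aux) simp
next
  case False
  then have jd: "j = d" using assms by simp
  have e: "gloc d k i s j = gloc d k i (Suc s) j" using assms False by (subst gloc.simps) simp
  show ?thesis using e jd by simp
qed

lemma exp_bounds:
  fixes f :: "'a \<Rightarrow> real"
  assumes "\<And>x. 0 \<le> f x" "\<And>x. f x \<le> B"
  shows "0 \<le> measure_pmf.expectation p f \<and> measure_pmf.expectation p f \<le> B"
proof -
  have intf: "integrable (measure_pmf p) f"
    using assms by (intro measure_pmf.integrable_const_bound[where B=B]) auto
  have "measure_pmf.expectation p f \<le> measure_pmf.expectation p (\<lambda>_. B)"
    using intf assms by (intro integral_mono) auto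
  then show ?thesis using assms by (simp add: integral_nonneg)
qed

lemma intb:
  fixes f :: "'a \<Rightarrow> real"
  assumes "\<And>x. \<bar>f x\<bar> \<le> B"
  shows "integrable (measure_pmf p) f"
  using assms by (intro measure_pmf.integrable_const_bound[where B=B]) auto

context mtv
begin

definition Hf :: "nat \<Rightarrow> int \<Rightarrow> nat \<Rightarrow> real" where
  "Hf i s j = (if s = -1 then 0 else gloc d k i (nat s) j)"

definition Wf :: "int \<Rightarrow> nat \<Rightarrow> real" where
  "Wf s j = (if 0 \<le> s \<and> s < int k then real (nat (int k - s)) + real (d - j) else 0)"

definition Jf :: "nat \<Rightarrow> int \<Rightarrow> nat \<Rightarrow> real" where
  "Jf i s j = (if s = -1 then 0 else if j = i then 1 else 0)"

lemma Hf_bounds: "0 \<le> Hf i s j \<and> Hf i s j \<le> 1"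
  unfolding Hf_def using gloc_bounds by auto

lemma Wf_bounds: "0 \<le> Wf s j \<and> Wf s j \<le> real (k + d)"
  unfolding Wf_def by auto

lemma Ind_bounds: "0 \<le> Ind s j \<and> Ind s j \<le> 1"
  unfolding Ind_def by auto

lemma inv_v: "mtinv d k n \<eta> \<Longrightarrow> -1 \<le> \<eta> v \<and> \<eta> v \<le> int k"
  unfolding mtinv_def by auto

lemma spreader_v: "spreader k \<eta> v \<longleftrightarrow> 0 \<le> \<eta> v \<and> \<eta> v < int k"
  unfolding spreader_def by simp

lemma step_H:
  assumes I: "mtinv d k n \<eta>"
  shows "measure_pmf.expectation (mt_step d k \<eta>) (loc (Hf i)) = loc (Hf i) \<eta>
     + gloc d k i 0 0 * (measure_pmf.expectation (mt_step d k \<eta>) (loc Ind) - loc Ind \<eta>)"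
proof (cases "\<eta> v = -1")
  case True
  have "measure_pmf.expectation (mt_step d k \<eta>) (loc (Hf i)) = Hf i 0 0 * measure_pmf.expectation (mt_step d k \<eta>) (loc Ind)"
    by (rule step_ignorant[OF I True]) (simp add: Hf_def)
  then show ?thesis using True by (simp add: loc_def Hf_def Ind_def)
next
  case vi: False
  show ?thesis
  proof (cases "spreader k \<eta> v")
    case False
    show ?thesis using step_stifler[OF I vi False] by simp
  next
    case True
    define s where "s = \<eta> v"
    define j where "j = nsucc_informed d \<eta> v"
    have s: "0 \<le> s" "s < int k" using True unfolding spreader_v s_def by auto
    have jd: "j \<le> d" unfolding j_def by (rule jv_le)
    have ns: "\<not> k \<le> nat s" using s by simp
    have ns1: "nat (s + 1) = Suc (nat s)" using s by simp
    have "real (d - j) * Hf i s (Suc j) + real (Suc j) * Hf i (s + 1) j - real (d + 1) * Hf i s j = 0"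
      unfolding Hf_def using s ns1 gloc_harm[OF ns jd] by simp
    then have h: "measure_pmf.expectation (mt_step d k \<eta>) (loc (Hf i)) = loc (Hf i) \<eta>"
      using step_spreader[OF I True, of "Hf i"] unfolding s_def j_def by simp
    have "real (d - j) * Ind s (Suc j) + real (Suc j) * Ind (s + 1) j - real (d + 1) * Ind s j = 0"
      unfolding Ind_def using s jd by (simp add: of_nat_diff)
    then have "measure_pmf.expectation (mt_step d k \<eta>) (loc Ind) = loc Ind \<eta>"
      using step_spreader[OF I True, of Ind] unfolding s_def j_def by simp
    then show ?thesis using h by simp
  qed
qed

lemma step_Ind_ge:
  assumes I: "mtinv d k n \<eta>"
  shows "measure_pmf.expectation (mt_step d k \<eta>) (loc Ind) \<ge> loc Ind \<eta>"
proof (cases "\<eta> v = -1")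
  case True
  have "measure_pmf.expectation (mt_step d k \<eta>) (loc Ind) \<ge> 0"
    using exp_bounds[of "loc Ind" 1] Ind_bounds unfolding loc_def by auto
  then show ?thesis using True by (simp add: loc_def Ind_def)
next
  case False
  then show ?thesis using informed_Ind[OF I False] by (simp add: loc_def Ind_def)
qed

lemma step_W:
  assumes I: "mtinv d k n \<eta>"
  shows "measure_pmf.expectation (mt_step d k \<eta>) (loc Wf) \<le> loc Wf \<eta> - loc Wf \<eta> / (real (k + d) * real (Suc n))
     + real (k + d) * (measure_pmf.expectation (mt_step d k \<eta>) (loc Ind) - loc Ind \<eta>)"
proof (cases "\<eta> v = -1")
  case True
  have "measure_pmf.expectation (mt_step d k \<eta>) (loc Wf) = Wf 0 0 * measure_pmf.expectation (mt_step d k \<eta>) (loc Ind)"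
    by (rule step_ignorant[OF I True]) (simp add: Wf_def)
  moreover have "Wf 0 0 = real (k + d)" using k1 by (simp add: Wf_def)
  ultimately show ?thesis using True by (simp add: loc_def Wf_def Ind_def)
next
  case vi: False
  show ?thesis
  proof (cases "spreader k \<eta> v")
    case False
    have "loc Wf \<eta> = 0" using False unfolding loc_def Wf_def spreader_v by auto
    then show ?thesis using step_stifler[OF I vi False, of Wf] step_stifler[OF I vi False, of Ind] by simp
  next
    case True
    define s where "s = \<eta> v"
    define j where "j = nsucc_informed d \<eta> v"
    define c where "c = real (card (contacts d k \<eta>))"
    have s: "0 \<le> s" "s < int k" using True unfolding spreader_v s_def by auto
    have jd: "j \<le> d" unfolding j_def by (rule jv_le)
    have W: "loc Wf \<eta> = real (nat (int k - s)) + real (d - j)" unfolding loc_def Wf_def s_def j_def using s s_def by simp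
    have Wle: "loc Wf \<eta> \<le> real (k + d)" using Wf_bounds unfolding loc_def by auto
    have D: "real (d - j) * Wf s (Suc j) + real (Suc j) * Wf (s + 1) j - real (d + 1) * Wf s j \<le> - real (d + 1)"
    proof -
      have a: "real (d - j) * Wf s (Suc j) \<le> real (d - j) * (Wf s j - 1)"
      proof (cases "j < d")
        case True
        then show ?thesis unfolding Wf_def using s by (simp add: of_nat_diff)
      next
        case False
        then show ?thesis using jd by simp
      qed
      have b: "Wf (s + 1) j \<le> Wf s j - 1"
        unfolding Wf_def using s jd by (auto simp: of_nat_diff nat_diff_distrib)
      have b': "real (Suc j) * Wf (s + 1) j \<le> real (Suc j) * (Wf s j - 1)"
        using b by (intro mult_left_mono) auto
      have "real (d - j) * (Wf s j - 1) + real (Suc j) * (Wf s j - 1) - real (d + 1) * Wf s j = - real (d + 1)"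
        using jd by (simp add: of_nat_diff algebra_simps)
      then show ?thesis using a b' by linarith
    qed
    have fC: "finite (contacts d k \<eta>)" using contacts_finite[OF I] .
    have "(v, tl v) \<in> contacts d k \<eta>" unfolding contacts_def using tv True nbrs_v by auto
    then have cpos: "c > 0" unfolding c_def using fC card_gt_0_iff by fastforce
    have cle: "c \<le> real (d + 1) * real (Suc n)" unfolding c_def using contacts_card[OF I]
      by (metis of_nat_le_iff of_nat_mult)
    have "(real (d - j) * Wf s (Suc j) + real (Suc j) * Wf (s + 1) j - real (d + 1) * Wf s j) / c \<le> - real (d + 1) / c"
      using D cpos by (simp add: divide_right_mono)
    also have "- real (d + 1) / c \<le> - real (d + 1) / (real (d + 1) * real (Suc n))"
    proof -
      have "real (d + 1) / (real (d + 1) * real (Suc n)) \<le> real (d + 1) / c"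
        using cpos cle by (intro frac_le) auto
      then show ?thesis by (simp only: minus_divide_left[symmetric] neg_le_iff_le)
    qed
    also have "\<dots> = - 1 / real (Suc n)"
    proof -
      have p: "real (Suc n) > 0" "real (d + 1) > 0" by auto
      have "real (d + 1) / (real (d + 1) * real (Suc n)) = 1 / real (Suc n)"
        using p by (simp only: nonzero_divide_mult_cancel_left order.strict_implies_not_eq not_sym)
      then show ?thesis by (metis minus_divide_left)
    qed
    also have "- 1 / real (Suc n) \<le> - (loc Wf \<eta> / (real (k + d) * real (Suc n)))"
    proof -
      have kd: "real (k + d) > 0" using k1 by simp
      have "loc Wf \<eta> / (real (k + d) * real (Suc n)) \<le> real (k + d) / (real (k + d) * real (Suc n))"
        using Wle kd by (intro divide_right_mono) auto
      also have "\<dots> = 1 / real (Suc n)" using kd by simp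
      finally show ?thesis by simp
    qed
    finally have step: "(real (d - j) * Wf s (Suc j) + real (Suc j) * Wf (s + 1) j - real (d + 1) * Wf s j) / c
         \<le> - (loc Wf \<eta> / (real (k + d) * real (Suc n)))" .
    have e1: "measure_pmf.expectation (mt_step d k \<eta>) (loc Wf) = loc Wf \<eta> +
         (real (d - j) * Wf s (Suc j) + real (Suc j) * Wf (s + 1) j - real (d + 1) * Wf s j) / c"
      using step_spreader[OF I True, of Wf] unfolding s_def j_def c_def by simp
    have "real (d - j) * Ind s (Suc j) + real (Suc j) * Ind (s + 1) j - real (d + 1) * Ind s j = 0"
      unfolding Ind_def using s jd by (simp add: of_nat_diff)
    then have "measure_pmf.expectation (mt_step d k \<eta>) (loc Ind) = loc Ind \<eta>"
      using step_spreader[OF I True, of Ind] unfolding s_def j_def by simp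
    then show ?thesis using e1 step by simp
  qed
qed

lemma JH_W:
  assumes I: "mtinv d k n \<eta>"
  shows "\<bar>loc (Jf i) \<eta> - loc (Hf i) \<eta>\<bar> \<le> loc Wf \<eta>"
proof -
  define s where "s = \<eta> v"
  define j where "j = nsucc_informed d \<eta> v"
  have s: "-1 \<le> s" "s \<le> int k" using inv_v[OF I] unfolding s_def by auto
  show ?thesis
  proof (cases "s = -1")
    case True then show ?thesis unfolding loc_def Jf_def Hf_def Wf_def s_def by simp
  next
    case False
    show ?thesis
    proof (cases "s = int k")
      case True
      have "gloc d k i (nat s) j = (if j = i then 1 else 0)" using True by (subst gloc.simps) simp
      then show ?thesis unfolding loc_def Jf_def Hf_def Wf_def s_def[symmetric] j_def[symmetric] using True False by simp
    next
      case False2: False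
      have sp: "0 \<le> s" "s < int k" using s False False2 by auto
      have "Wf s j \<ge> 1" unfolding Wf_def using sp by simp
      moreover have "0 \<le> gloc d k i (nat s) j" "gloc d k i (nat s) j \<le> 1" using gloc_bounds by auto
      ultimately show ?thesis unfolding loc_def Jf_def Hf_def s_def[symmetric] j_def[symmetric] using False
        by auto
    qed
  qed
qed

end




lemma seq_to_zero:
  fixes a P :: "nat \<Rightarrow> real" and K c :: real
  assumes a0: "\<And>n. 0 \<le> a n" and c0: "c > 0" and K0: "K \<ge> 0"
    and Pinc: "\<And>n. P n \<le> P (Suc n)" and P1: "\<And>n. P n \<le> 1"
    and rec: "\<And>n. a (Suc n) \<le> a n - c * a n / real (Suc n) + K * (P (Suc n) - P n)"
  shows "a \<longlonglongrightarrow> 0"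
proof -
  define b where "b n = a n - K * P n" for n
  have bdec: "b (Suc n) \<le> b n - c * a n / real (Suc n)" for n
    using rec[of n] unfolding b_def by (simp add: algebra_simps)
  have cpos: "c * a n / real (Suc n) \<ge> 0" for n using a0 c0 by simp
  have bs: "b (Suc n) \<le> b n" for n using bdec[of n] cpos[of n] by linarith
  have decb: "decseq b" using bs by (intro decseq_SucI)
  have KP: "K * P n \<le> K" for n using P1 K0 by (simp add: mult_left_le)
  have blow1: "- K \<le> b i" for i unfolding b_def using KP[of i] a0[of i] by linarith
  have blow: "\<forall>i. - K \<le> b i" using blow1 by blast
  obtain Lb where Lb: "b \<longlonglongrightarrow> Lb" using decseq_convergent[OF decb blow] by blast
  have incP: "incseq P" using Pinc by (intro incseq_SucI) auto
  obtain LP where LP: "P \<longlonglongrightarrow> LP" using incseq_convergent[OF incP, of 1] P1 by blast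
  have aeq: "a = (\<lambda>n. b n + K * P n)" unfolding b_def by auto
  have La: "a \<longlonglongrightarrow> Lb + K * LP" unfolding aeq by (intro tendsto_intros Lb LP)
  define L where "L = Lb + K * LP"
  have L0: "L \<ge> 0" using La a0 unfolding L_def by (intro LIMSEQ_le_const[OF La]) auto
  have partial: "(\<Sum>i<n. c * a i / real (Suc i)) \<le> b 0 - b n" for n
  proof (induction n)
    case 0 then show ?case by simp
  next
    case (Suc n) then show ?case using bdec[of n] by simp
  qed
  have summ: "summable (\<lambda>i. c * a i / real (Suc i))"
  proof (rule summableI_nonneg_bounded[where x = "b 0 + K"])
    show "0 \<le> c * a n / real (Suc n)" for n using cpos by simp
    show "(\<Sum>i<n. c * a i / real (Suc i)) \<le> b 0 + K" for n using partial[of n] blow1[of n] by linarith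
  qed
  show ?thesis
  proof (cases "L = 0")
    case True then show ?thesis using La unfolding L_def by simp
  next
    case False
    then have Lp: "L > 0" using L0 by simp
    have ev: "eventually (\<lambda>n. a n > L / 2) sequentially"
      using La Lp unfolding L_def[symmetric] by (intro order_tendstoD(1)) auto
    have "eventually (\<lambda>n. norm (inverse (real (Suc n))) \<le> (2 / (c * L)) * (c * a n / real (Suc n))) sequentially"
      using ev
    proof eventually_elim
      case (elim n)
      have "1 \<le> (2 / (c * L)) * (c * a n)" using elim c0 Lp by (simp add: field_simps)
      then have "1 / real (Suc n) \<le> (2 / (c * L)) * (c * a n) / real (Suc n)"
        by (intro divide_right_mono) auto
      then show ?case by (simp add: divide_inverse)
    qed
    moreover have "summable (\<lambda>n. (2 / (c * L)) * (c * a n / real (Suc n)))"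
      using summ by (rule summable_mult)
    ultimately have "summable (\<lambda>n. inverse (real (Suc n)))" by (rule summable_comparison_test_ev)
    then have "summable (\<lambda>n. inverse (real n))" using summable_Suc_iff[of "\<lambda>n. inverse (real n)"] by simp
    then show ?thesis using not_summable_harmonic by blast
  qed
qed




lemma path_informed:
  assumes k1: "1 \<le> k"
  shows "tvert d u \<Longrightarrow> \<exists>n \<eta>. \<eta> \<in> set_pmf (mt_cfg d k n) \<and> \<eta> u = 0 \<and> (\<forall>c. \<eta> (c # u) = -1)"
proof (induction u)
  case Nil
  have "init_cfg \<in> set_pmf (mt_cfg d k 0)" by simp
  then show ?case by (intro exI[of _ 0] exI[of _ init_cfg]) (simp add: init_cfg_def)
next
  case (Cons c u)
  have tu: "tvert d u" and cu: "c < nsucc d u" using Cons.prems by auto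
  obtain n \<eta> where e: "\<eta> \<in> set_pmf (mt_cfg d k n)" and eu: "\<eta> u = 0" and ec: "\<forall>c. \<eta> (c # u) = -1"
    using Cons.IH[OF tu] by blast
  have I: "mtinv d k n \<eta>" using inv_cfg[OF e] .
  let ?C = "contacts d k \<eta>"
  have pC: "(u, c # u) \<in> ?C"
    unfolding contacts_def spreader_def nbrs_def succs_def using tu cu eu k1 by auto
  have fC: "finite ?C" using contacts_finite[OF I] .
  have "contact_update \<eta> (u, c # u) = \<eta>(c # u := 0)" using ec unfolding contact_update_def by simp
  then have st: "\<eta>(c # u := 0) \<in> set_pmf (mt_step d k \<eta>)"
    unfolding mt_step_def using pC fC by (auto intro!: image_eqI[of _ _ "(u, c # u)"])
  have m: "\<eta>(c # u := 0) \<in> set_pmf (mt_cfg d k (Suc n))"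
    unfolding mt_cfg.simps set_bind_pmf using e st by blast
  have z: "(\<eta>(c # u := 0)) (c # u) = 0" by simp
  have "\<forall>c'. (\<eta>(c # u := 0)) (c' # c # u) = -1"
  proof
    fix c'
    have "\<eta> (c' # c # u) = -1"
    proof (rule ccontr)
      assume "\<eta> (c' # c # u) \<noteq> -1"
      then have "\<eta> (tl (c' # c # u)) \<noteq> -1" using inv_parent[OF I] by blast
      then show False using ec by simp
    qed
    then show "(\<eta>(c # u := 0)) (c' # c # u) = -1" by simp
  qed
  then show ?case using m z by blast
qed

context mtv
begin

lemma AE_inv: "AE \<eta> in measure_pmf (mt_cfg d k n). mtinv d k n \<eta>"
  by (rule AE_pmfI) (rule inv_cfg)

lemma EE_Suc:
  assumes "\<And>s j. 0 \<le> F s j" "\<And>s j. F s j \<le> B"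
  shows "measure_pmf.expectation (mt_cfg d k (Suc n)) (loc F)
       = measure_pmf.expectation (mt_cfg d k n) (\<lambda>\<eta>. measure_pmf.expectation (mt_step d k \<eta>) (loc F))"
  unfolding mt_cfg.simps
  by (rule integral_bind_pmf_nonneg[where B = B]) (use assms in \<open>auto simp: loc_def\<close>)

lemma int_loc:
  assumes "\<And>s j. 0 \<le> F s j" "\<And>s j. F s j \<le> B"
  shows "integrable (measure_pmf p) (loc F)"
  by (rule intb[where B = B]) (use assms in \<open>auto simp: loc_def abs_le_iff intro: order_trans\<close>)

lemma int_step:
  assumes "\<And>s j. 0 \<le> F s j" "\<And>s j. F s j \<le> B"
  shows "integrable (measure_pmf p) (\<lambda>\<eta>. measure_pmf.expectation (mt_step d k \<eta>) (loc F))"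
proof (rule intb[where B = B])
  fix \<eta>
  have "0 \<le> measure_pmf.expectation (mt_step d k \<eta>) (loc F) \<and> measure_pmf.expectation (mt_step d k \<eta>) (loc F) \<le> B"
    by (rule exp_bounds) (use assms in \<open>auto simp: loc_def\<close>)
  then show "\<bar>measure_pmf.expectation (mt_step d k \<eta>) (loc F)\<bar> \<le> B" by simp
qed

definition Pn :: "nat \<Rightarrow> real" where "Pn n = measure_pmf.expectation (mt_cfg d k n) (loc Ind)"
definition An :: "nat \<Rightarrow> real" where "An n = measure_pmf.expectation (mt_cfg d k n) (loc Wf)"
definition Hn :: "nat \<Rightarrow> nat \<Rightarrow> real" where "Hn i n = measure_pmf.expectation (mt_cfg d k n) (loc (Hf i))"
definition Jn :: "nat \<Rightarrow> nat \<Rightarrow> real" where "Jn i n = measure_pmf.expectation (mt_cfg d k n) (loc (Jf i))"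

lemma Ind_b: "0 \<le> Ind s j" "Ind s j \<le> 1" using Ind_bounds by auto
lemma Hf_b: "0 \<le> Hf i s j" "Hf i s j \<le> 1" using Hf_bounds by auto
lemma Wf_b: "0 \<le> Wf s j" "Wf s j \<le> real (k + d)" using Wf_bounds by auto
lemma Jf_b: "0 \<le> Jf i s j" "Jf i s j \<le> 1" unfolding Jf_def by auto

lemma Pn_Suc: "Pn (Suc n) = measure_pmf.expectation (mt_cfg d k n) (\<lambda>\<eta>. measure_pmf.expectation (mt_step d k \<eta>) (loc Ind))"
  unfolding Pn_def by (rule EE_Suc[OF Ind_b])

lemma Pn_mono: "Pn n \<le> Pn (Suc n)"
proof -
  have AE: "AE \<eta> in measure_pmf (mt_cfg d k n). loc Ind \<eta> \<le> measure_pmf.expectation (mt_step d k \<eta>) (loc Ind)"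
    using AE_inv[of n] by (rule eventually_mono) (rule step_Ind_ge)
  show ?thesis unfolding Pn_Suc unfolding Pn_def
    by (rule integral_mono_AE[OF int_loc[OF Ind_b] int_step[OF Ind_b] AE])
qed

lemma Pn_bounds: "0 \<le> Pn n \<and> Pn n \<le> 1"
  unfolding Pn_def by (rule exp_bounds) (auto simp: loc_def Ind_b)

lemma An_bounds: "0 \<le> An n"
  unfolding An_def using exp_bounds[of "loc Wf" "real (k + d)"] by (auto simp: loc_def Wf_b)

lemma init_v: "init_cfg v = -1" using vne by (simp add: init_cfg_def)

lemma Hn_eq: "Hn i n = gloc d k i 0 0 * Pn n"
proof (induction n)
  case 0
  then show ?case unfolding Hn_def Pn_def by (simp add: loc_def init_v Hf_def Ind_def)
next
  case (Suc n)
  let ?g = "gloc d k i 0 0"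
  let ?M = "measure_pmf (mt_cfg d k n)"
  let ?SI = "\<lambda>\<eta>. measure_pmf.expectation (mt_step d k \<eta>) (loc Ind)"
  have "Hn i (Suc n) = measure_pmf.expectation (mt_cfg d k n) (\<lambda>\<eta>. measure_pmf.expectation (mt_step d k \<eta>) (loc (Hf i)))"
    unfolding Hn_def by (rule EE_Suc[OF Hf_b])
  also have "\<dots> = measure_pmf.expectation (mt_cfg d k n) (\<lambda>\<eta>. loc (Hf i) \<eta> + ?g * (?SI \<eta> - loc Ind \<eta>))"
  proof -
    have AEH: "AE \<eta> in ?M. measure_pmf.expectation (mt_step d k \<eta>) (loc (Hf i)) = loc (Hf i) \<eta> + ?g * (?SI \<eta> - loc Ind \<eta>)"
      using AE_inv[of n] by (rule eventually_mono) (rule step_H)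
    show ?thesis by (rule integral_cong_AE[OF _ _ AEH]) simp_all
  qed
  also have "\<dots> = Hn i n + ?g * (measure_pmf.expectation (mt_cfg d k n) ?SI - Pn n)"
  proof -
    have i1: "integrable ?M (loc (Hf i))" by (rule int_loc[OF Hf_b])
    have i2: "integrable ?M ?SI" by (rule int_step[OF Ind_b])
    have i3: "integrable ?M (loc Ind)" by (rule int_loc[OF Ind_b])
    have "measure_pmf.expectation (mt_cfg d k n) (\<lambda>\<eta>. loc (Hf i) \<eta> + ?g * (?SI \<eta> - loc Ind \<eta>))
        = measure_pmf.expectation (mt_cfg d k n) (loc (Hf i)) + measure_pmf.expectation (mt_cfg d k n) (\<lambda>\<eta>. ?g * (?SI \<eta> - loc Ind \<eta>))"
      using i1 i2 i3 by (intro Bochner_Integration.integral_add) auto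
    also have "measure_pmf.expectation (mt_cfg d k n) (\<lambda>\<eta>. ?g * (?SI \<eta> - loc Ind \<eta>))
        = ?g * measure_pmf.expectation (mt_cfg d k n) (\<lambda>\<eta>. ?SI \<eta> - loc Ind \<eta>)" by simp
    also have "measure_pmf.expectation (mt_cfg d k n) (\<lambda>\<eta>. ?SI \<eta> - loc Ind \<eta>)
        = measure_pmf.expectation (mt_cfg d k n) ?SI - Pn n"
      unfolding Pn_def using i2 i3 by (rule Bochner_Integration.integral_diff)
    finally show ?thesis unfolding Hn_def .
  qed
  also have "\<dots> = ?g * Pn (Suc n)" using Suc Pn_Suc by (simp add: algebra_simps)
  finally show ?case .
qed

lemma An_rec: "An (Suc n) \<le> An n - (1 / real (k + d)) * An n / real (Suc n) + real (k + d) * (Pn (Suc n) - Pn n)"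
proof -
  let ?M = "measure_pmf (mt_cfg d k n)"
  let ?SI = "\<lambda>\<eta>. measure_pmf.expectation (mt_step d k \<eta>) (loc Ind)"
  let ?c = "real (k + d) * real (Suc n)"
  have i2: "integrable ?M ?SI" by (rule int_step[OF Ind_b])
  have i3: "integrable ?M (loc Ind)" by (rule int_loc[OF Ind_b])
  have iw: "integrable ?M (loc Wf)" by (rule int_loc[OF Wf_b])
  have "An (Suc n) = measure_pmf.expectation (mt_cfg d k n) (\<lambda>\<eta>. measure_pmf.expectation (mt_step d k \<eta>) (loc Wf))"
    unfolding An_def by (rule EE_Suc[OF Wf_b])
  also have "\<dots> \<le> measure_pmf.expectation (mt_cfg d k n) (\<lambda>\<eta>. loc Wf \<eta> - loc Wf \<eta> / ?c + real (k + d) * (?SI \<eta> - loc Ind \<eta>))"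
  proof -
    have AEW: "AE \<eta> in ?M. measure_pmf.expectation (mt_step d k \<eta>) (loc Wf) \<le> loc Wf \<eta> - loc Wf \<eta> / ?c + real (k + d) * (?SI \<eta> - loc Ind \<eta>)"
      using AE_inv[of n] by (rule eventually_mono) (rule step_W)
    show ?thesis
      by (rule integral_mono_AE[OF int_step[OF Wf_b] _ AEW]) (use i2 i3 iw in auto)
  qed
  also have "\<dots> = An n - An n / ?c + real (k + d) * (Pn (Suc n) - Pn n)"
  proof -
    have "measure_pmf.expectation (mt_cfg d k n) (\<lambda>\<eta>. loc Wf \<eta> - loc Wf \<eta> / ?c + real (k + d) * (?SI \<eta> - loc Ind \<eta>))
      = measure_pmf.expectation (mt_cfg d k n) (\<lambda>\<eta>. loc Wf \<eta> - loc Wf \<eta> / ?c) + measure_pmf.expectation (mt_cfg d k n) (\<lambda>\<eta>. real (k + d) * (?SI \<eta> - loc Ind \<eta>))"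
      using i2 i3 iw by (intro Bochner_Integration.integral_add) auto
    also have "measure_pmf.expectation (mt_cfg d k n) (\<lambda>\<eta>. loc Wf \<eta> - loc Wf \<eta> / ?c) = An n - An n / ?c"
      unfolding An_def using iw by (subst Bochner_Integration.integral_diff) auto
    also have "measure_pmf.expectation (mt_cfg d k n) (\<lambda>\<eta>. real (k + d) * (?SI \<eta> - loc Ind \<eta>))
       = real (k + d) * (measure_pmf.expectation (mt_cfg d k n) ?SI - Pn n)"
      unfolding Pn_def using i2 i3 by (subst integral_mult_right_zero) (simp add: Bochner_Integration.integral_diff)
    finally show ?thesis using Pn_Suc by simp
  qed
  also have "An n / ?c = (1 / real (k + d)) * An n / real (Suc n)" by simp
  finally show ?thesis .
qed

lemma JH_bound: "\<bar>Jn i n - Hn i n\<bar> \<le> An n"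
proof -
  let ?M = "measure_pmf (mt_cfg d k n)"
  have ij: "integrable ?M (loc (Jf i))" by (rule int_loc[OF Jf_b])
  have ih: "integrable ?M (loc (Hf i))" by (rule int_loc[OF Hf_b])
  have iw: "integrable ?M (loc Wf)" by (rule int_loc[OF Wf_b])
  have A1: "AE \<eta> in ?M. loc (Jf i) \<eta> - loc (Hf i) \<eta> \<le> loc Wf \<eta>"
    using AE_inv[of n] by (rule eventually_mono) (use JH_W[of n _ i] in \<open>simp add: abs_le_iff\<close>)
  have A2: "AE \<eta> in ?M. loc (Hf i) \<eta> - loc (Jf i) \<eta> \<le> loc Wf \<eta>"
    using AE_inv[of n] by (rule eventually_mono) (use JH_W[of n _ i] in \<open>simp add: abs_le_iff\<close>)
  have "measure_pmf.expectation (mt_cfg d k n) (\<lambda>\<eta>. loc (Jf i) \<eta> - loc (Hf i) \<eta>) \<le> An n"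
    unfolding An_def by (rule integral_mono_AE[OF _ iw A1]) (use ij ih in simp)
  moreover have "measure_pmf.expectation (mt_cfg d k n) (\<lambda>\<eta>. loc (Hf i) \<eta> - loc (Jf i) \<eta>) \<le> An n"
    unfolding An_def by (rule integral_mono_AE[OF _ iw A2]) (use ij ih in simp)
  ultimately show ?thesis unfolding Jn_def Hn_def using ij ih by (simp add: Bochner_Integration.integral_diff abs_le_iff)
qed

lemma informed_eq: "informed_by d k n v = Pn n"
proof -
  have "Pn n = measure_pmf.expectation (mt_cfg d k n) (indicator {\<eta>. \<eta> v \<noteq> -1})"
    unfolding Pn_def by (rule Bochner_Integration.integral_cong) (auto simp: loc_def Ind_def indicator_def)
  then show ?thesis unfolding informed_by_def by simp
qed

lemma joint_eq: "joint_by d k n v i = Jn i n"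
proof -
  have "Jn i n = measure_pmf.expectation (mt_cfg d k n) (indicator {\<eta>. \<eta> v \<noteq> -1 \<and> nsucc_informed d \<eta> v = i})"
    unfolding Jn_def by (rule Bochner_Integration.integral_cong) (auto simp: loc_def Jf_def indicator_def)
  then show ?thesis unfolding joint_by_def by simp
qed

end




context mtv
begin

lemma main:
  assumes k2: "2 \<le> k" and d2: "2 \<le> d"
  shows "convergent (\<lambda>n. informed_by d k n v)
    \<and> P_informed d k v > 0
    \<and> (\<forall>i \<le> d. convergent (\<lambda>n. joint_by d k n v i)
        \<and> P_X d k v i = real (d choose i) * fact (i + 1) / real (d + 1) ^ (i + k)
                         * real (S_ik i k))
    \<and> (\<Sum>i = 0..d. real i * P_X d k v i) > 1"
proof -
  have incP: "incseq Pn" using Pn_mono by (intro incseq_SucI) auto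
  obtain LP where LP: "Pn \<longlonglongrightarrow> LP" and LPge: "\<forall>i. Pn i \<le> LP"
    using incseq_convergent[OF incP, of 1] Pn_bounds by blast
  have infeq: "(\<lambda>n. informed_by d k n v) = Pn" using informed_eq by auto
  have conv1: "convergent (\<lambda>n. informed_by d k n v)" unfolding infeq using LP by (rule convergentI)
  have PI: "P_informed d k v = LP" unfolding P_informed_def infeq using LP by (rule limI)
  obtain n0 \<eta>0 where e0: "\<eta>0 \<in> set_pmf (mt_cfg d k n0)" and v0: "\<eta>0 v = 0"
    using path_informed[OF k1 tv] by blast
  have "informed_by d k n0 v > 0" unfolding informed_by_def
    by (rule measure_pmf_posI[OF e0]) (simp add: v0)
  then have "Pn n0 > 0" using informed_eq by simp
  then have LPpos: "LP > 0" using LPge by (meson less_le_trans)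
  have A0: "An \<longlonglongrightarrow> 0"
  proof (rule seq_to_zero[where c = "1 / real (k + d)" and K = "real (k + d)" and P = Pn])
    show "\<And>n. 0 \<le> An n" using An_bounds by simp
    show "0 < 1 / real (k + d)" using k1 by simp
    show "0 \<le> real (k + d)" by simp
    show "\<And>n. Pn n \<le> Pn (Suc n)" by (rule Pn_mono)
    show "\<And>n. Pn n \<le> 1" using Pn_bounds by simp
    show "\<And>n. An (Suc n) \<le> An n - 1 / real (k + d) * An n / real (Suc n) + real (k + d) * (Pn (Suc n) - Pn n)"
      by (rule An_rec)
  qed
  have J: "(\<lambda>n. joint_by d k n v i) \<longlonglongrightarrow> gloc d k i 0 0 * LP" for i
  proof -
    have jeq: "(\<lambda>n. joint_by d k n v i) = Jn i" using joint_eq by auto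
    have H: "Hn i \<longlonglongrightarrow> gloc d k i 0 0 * LP" unfolding Hn_eq[abs_def] by (intro tendsto_intros LP)
    have lo: "(\<lambda>n. Hn i n - An n) \<longlonglongrightarrow> gloc d k i 0 0 * LP - 0" by (intro tendsto_intros H A0)
    have hi: "(\<lambda>n. Hn i n + An n) \<longlonglongrightarrow> gloc d k i 0 0 * LP + 0" by (intro tendsto_intros H A0)
    have "Jn i \<longlonglongrightarrow> gloc d k i 0 0 * LP"
    proof (rule tendsto_sandwich[OF _ _ lo[simplified] hi[simplified]])
      show "\<forall>\<^sub>F n in sequentially. Hn i n - An n \<le> Jn i n" using JH_bound[of i] by (simp add: abs_le_iff algebra_simps)
      show "\<forall>\<^sub>F n in sequentially. Jn i n \<le> Hn i n + An n" using JH_bound[of i] by (simp add: abs_le_iff algebra_simps)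
    qed
    then show ?thesis unfolding jeq .
  qed
  have PX: "P_X d k v i = gloc d k i 0 0" for i
  proof -
    have "P_joint d k v i = gloc d k i 0 0 * LP" unfolding P_joint_def using J[of i] by (rule limI)
    then show ?thesis unfolding P_X_def PI using LPpos by simp
  qed
  have part3: "\<forall>i \<le> d. convergent (\<lambda>n. joint_by d k n v i)
        \<and> P_X d k v i = real (d choose i) * fact (i + 1) / real (d + 1) ^ (i + k) * real (S_ik i k)"
  proof (intro allI impI conjI)
    fix i assume "i \<le> d"
    show "convergent (\<lambda>n. joint_by d k n v i)" using J[of i] by (rule convergentI)
    show "P_X d k v i = real (d choose i) * fact (i + 1) / real (d + 1) ^ (i + k) * real (S_ik i k)"
      unfolding PX using gloc_formula0[OF \<open>i \<le> d\<close> k1] .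
  qed
  have "(\<Sum>i = 0..d. real i * P_X d k v i) = Eloc d k 0 0" unfolding PX Eloc_def ..
  then have part4: "(\<Sum>i = 0..d. real i * P_X d k v i) > 1" using Eloc_gt1[OF k2 d2] by simp
  show ?thesis using conv1 PI LPpos part3 part4 by simp
qed

end

theorem lemma3:
  fixes d k :: nat and v :: "nat list"
  assumes "k \<ge> 2" and "d \<ge> 2"
    and "tvert d v" and "v \<noteq> []"
  shows "convergent (\<lambda>n. informed_by d k n v)
    \<and> P_informed d k v > 0
    \<and> (\<forall>i \<le> d. convergent (\<lambda>n. joint_by d k n v i)
        \<and> P_X d k v i = real (d choose i) * fact (i + 1) / real (d + 1) ^ (i + k)
                         * real (S_ik i k))
    \<and> (\<Sum>i = 0..d. real i * P_X d k v i) > 1"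
proof -
  interpret mtv d k v using assms by unfold_locales auto
  show ?thesis using main assms by blast
qed


end
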